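(* Let $G,H$ be locally compact second countable compactly generated groups, $\varphi\colon\mathbb{R}_+\to\mathbb{R}_+$ a map, $G\curvearrowright(X,\nu)$ a free probability measure-preserving action on a standard probability space, and $c\colon G\times X\to H$ a $\varphi$-integrable $H$-valued cocycle. Then there exist a measurable subset $A\subset G$ and a sequence $(K_n)_{n\ge1}$ of positive integers such that: $\lambda_G(A)>0$ and $A$ contains a countable dense subset of $G$; $K_n\to+\infty$; and for every $g\in A$ the series $\sum_{n\ge1}K_n\,\varphi(n)\,\nu(\{x: |c(g,x)|_H=n\})$ converges.
   Context: An $H$-valued cocycle is a measurable $c\colon G\times X\to H$ with $c(g_1g_2,x)=c(g_1,g_2\cdot x)c(g_2,x)$. $|\cdot|_H$ is the (integer-valued) word length on $H$ for a compact generating set; $\lambda_G$ is a Haar measure; $c$ is $\varphi$-integrable if $\sup_{g\in S_G}\int_X\varphi(|c(g,x)|_H)\,d\nu(x)<\infty$ for a compact generating set $S_G$ of $G$ (and in particular $\int_X\varphi(|c(g,x)|_H)d\nu(x)<\infty$ for every $g\in G$). *)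

theory Defs
  imports "HOL-Analysis.Analysis" "HOL-Probability.Probability"
begin

text \<open>Groups are written additively (type class group_add, possibly non-commutative).\<close>

definition generates :: "'a::group_add set \<Rightarrow> bool" where
  "generates S \<longleftrightarrow> (\<forall>h. \<exists>xs. set xs \<subseteq> S \<union> uminus ` S \<and> sum_list xs = h)"

definition word_length :: "'a::group_add set \<Rightarrow> 'a \<Rightarrow> nat" where
  "word_length S h = (LEAST n. \<exists>xs. length xs = n \<and> set xs \<subseteq> S \<union> uminus ` S \<and> sum_list xs = h)"

definition compactly_generated :: "'a::{group_add,topological_space} itself \<Rightarrow> bool" where
  "compactly_generated _ \<longleftrightarrow> (\<exists>S::'a set. compact S \<and> generates S)"

definition haar_measure :: "'a::topological_group_add measure \<Rightarrow> bool" where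
  "haar_measure M \<longleftrightarrow>
     sets M = sets borel \<and>
     (\<forall>g. \<forall>A\<in>sets borel. emeasure M ((+) g ` A) = emeasure M A) \<and>
     (\<forall>K. compact K \<longrightarrow> emeasure M K < \<infinity>) \<and>
     (\<forall>U. open U \<and> U \<noteq> {} \<longrightarrow> emeasure M U > 0) \<and>
     (\<forall>A\<in>sets borel. emeasure M A = (INF U\<in>{U. open U \<and> A \<subseteq> U}. emeasure M U)) \<and>
     (\<forall>U. open U \<longrightarrow> emeasure M U = (SUP K\<in>{K. compact K \<and> K \<subseteq> U}. emeasure M K))"

definition pmp_action :: "('g::{topological_group_add} \<Rightarrow> 'x \<Rightarrow> 'x) \<Rightarrow> 'x measure \<Rightarrow> bool" where
  "pmp_action act \<nu> \<longleftrightarrow>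
     prob_space \<nu> \<and>
     (\<lambda>(g, x). act g x) \<in> measurable (borel \<Otimes>\<^sub>M \<nu>) \<nu> \<and>
     (\<forall>x\<in>space \<nu>. act 0 x = x) \<and>
     (\<forall>g1 g2. \<forall>x\<in>space \<nu>. act (g1 + g2) x = act g1 (act g2 x)) \<and>
     (\<forall>g. distr \<nu> \<nu> (act g) = \<nu>)"

definition free_action :: "('g::group_add \<Rightarrow> 'x \<Rightarrow> 'x) \<Rightarrow> 'x measure \<Rightarrow> bool" where
  "free_action act \<nu> \<longleftrightarrow> (\<forall>g. \<forall>x\<in>space \<nu>. act g x = x \<longrightarrow> g = 0)"

definition cocycle :: "('g::topological_group_add \<Rightarrow> 'x \<Rightarrow> 'x) \<Rightarrow> 'x measure \<Rightarrow>
    ('g \<Rightarrow> 'x \<Rightarrow> 'h::topological_group_add) \<Rightarrow> bool" where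
  "cocycle act \<nu> c \<longleftrightarrow>
     (\<lambda>(g, x). c g x) \<in> borel_measurable (borel \<Otimes>\<^sub>M \<nu>) \<and>
     (\<forall>g1 g2. \<forall>x\<in>space \<nu>. c (g1 + g2) x = c g1 (act g2 x) + c g2 x)"

text \<open>phi-integrability w.r.t. compact generating sets SG of G and SH of H
  (including, as in the paper, finiteness of the integral for every g).\<close>
definition phi_integrable :: "(real \<Rightarrow> real) \<Rightarrow> 'g::group_add set \<Rightarrow> 'h::group_add set \<Rightarrow>
    'x measure \<Rightarrow> ('g \<Rightarrow> 'x \<Rightarrow> 'h) \<Rightarrow> bool" where
  "phi_integrable \<phi> SG SH \<nu> c \<longleftrightarrow>
     (\<exists>B::real. \<forall>g\<in>SG. (\<integral>\<^sup>+ x. ennreal (\<phi> (real (word_length SH (c g x)))) \<partial>\<nu>) \<le> ennreal B) \<and>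
     (\<forall>g. (\<integral>\<^sup>+ x. ennreal (\<phi> (real (word_length SH (c g x)))) \<partial>\<nu>) < \<infinity>)"

end

theory Submission
  imports Defs
begin
lemma wl_le:
  assumes "generates S"
  shows "word_length S h \<le> n \<longleftrightarrow> (\<exists>xs. length xs \<le> n \<and> set xs \<subseteq> S \<union> uminus ` S \<and> sum_list xs = h)"
proof
  obtain xs where xs: "set xs \<subseteq> S \<union> uminus ` S \<and> sum_list xs = h" using assms unfolding generates_def by blast
  let ?P = "\<lambda>n. \<exists>xs. length xs = n \<and> set xs \<subseteq> S \<union> uminus ` S \<and> sum_list xs = h"
  have "?P (Least ?P)" by (rule LeastI[of _ "length xs"]) (use xs in blast)
  then show "word_length S h \<le> n \<Longrightarrow> (\<exists>xs. length xs \<le> n \<and> set xs \<subseteq> S \<union> uminus ` S \<and> sum_list xs = h)"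
    unfolding word_length_def by force
next
  assume "\<exists>xs. length xs \<le> n \<and> set xs \<subseteq> S \<union> uminus ` S \<and> sum_list xs = h"
  then obtain xs where "length xs \<le> n" "set xs \<subseteq> S \<union> uminus ` S" "sum_list xs = h" by blast
  then have "word_length S h \<le> length xs" unfolding word_length_def
    by (intro Least_le) blast
  then show "word_length S h \<le> n" using \<open>length xs \<le> n\<close> by linarith
qed

lemma compact_words:
  fixes T :: "'a::topological_group_add set"
  assumes "compact T"
  shows "compact {sum_list xs | xs. length xs = m \<and> set xs \<subseteq> T}"
proof (induction m)
  case 0
  then show ?case by simp
next
  case (Suc m)
  have eq: "{sum_list xs | xs. length xs = Suc m \<and> set xs \<subseteq> T} =
     (\<lambda>p. fst p + snd p) ` (T \<times> {sum_list xs | xs. length xs = m \<and> set xs \<subseteq> T})"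
  proof (intro set_eqI iffI)
    fix y assume "y \<in> {sum_list xs | xs. length xs = Suc m \<and> set xs \<subseteq> T}"
    then obtain xs where "length xs = Suc m" "set xs \<subseteq> T" "y = sum_list xs" by blast
    then show "y \<in> (\<lambda>p. fst p + snd p) ` (T \<times> {sum_list xs | xs. length xs = m \<and> set xs \<subseteq> T})"
      by (cases xs) (auto intro!: image_eqI[where x="(hd xs, sum_list (tl xs))"])
  next
    fix y assume "y \<in> (\<lambda>p. fst p + snd p) ` (T \<times> {sum_list xs | xs. length xs = m \<and> set xs \<subseteq> T})"
    then obtain a xs where "a \<in> T" "length xs = m" "set xs \<subseteq> T" "y = a + sum_list xs" by auto
    then show "y \<in> {sum_list xs | xs. length xs = Suc m \<and> set xs \<subseteq> T}"
      by (intro CollectI exI[of _ "a # xs"]) auto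
  qed
  show ?case unfolding eq
    by (intro compact_continuous_image compact_Times Suc assms continuous_intros)
qed

lemma wl_closed:
  fixes S :: "'a::{topological_group_add, t2_space} set"
  assumes "generates S" "compact S"
  shows "closed {h. word_length S h \<le> n}"
proof -
  let ?T = "S \<union> uminus ` S"
  have cT: "compact ?T"
    by (intro compact_Un assms compact_continuous_image continuous_intros)
  have "{h. word_length S h \<le> n} = (\<Union>m\<le>n. {sum_list xs | xs. length xs = m \<and> set xs \<subseteq> ?T})"
    using wl_le[OF assms(1)] by auto
  moreover have "compact (\<Union>m\<le>n. {sum_list xs | xs. length xs = m \<and> set xs \<subseteq> ?T})"
    by (intro compact_UN compact_words cT) auto
  ultimately show ?thesis by (simp add: compact_imp_closed)
qed

lemma wl_eq_borel:
  fixes S :: "'a::{topological_group_add, t2_space} set"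
  assumes "generates S" "compact S"
  shows "{h. word_length S h = n} \<in> sets borel"
proof (cases n)
  case 0
  then show ?thesis using wl_closed[OF assms, of 0] by (simp add: borel_closed)
next
  case (Suc m)
  have "{h. word_length S h = n} = {h. word_length S h \<le> n} - {h. word_length S h \<le> m}"
    using Suc by auto
  then show ?thesis using wl_closed[OF assms] by (simp add: borel_closed sets.Diff)
qed

lemma ennreal_suminf_swap: "(\<Sum>n. \<Sum>k. f n k :: ennreal) = (\<Sum>k. \<Sum>n. f n k)"
proof -
  have "(\<Sum>n. \<Sum>k. f n k) = (\<Sum>n. \<integral>\<^sup>+k. f n k \<partial>count_space UNIV)"
    by (simp add: nn_integral_count_space_nat)
  also have "\<dots> = (\<integral>\<^sup>+k. (\<Sum>n. f n k) \<partial>count_space UNIV)"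
    by (rule nn_integral_suminf[symmetric]) auto
  also have "\<dots> = (\<Sum>k. \<Sum>n. f n k)"
    by (simp add: nn_integral_count_space_nat)
  finally show ?thesis .
qed

lemma core:
  fixes a :: "nat \<Rightarrow> 'g \<Rightarrow> real" and lam :: "'g measure" and d :: "nat \<Rightarrow> 'g"
  assumes nonneg: "\<And>n g. 0 \<le> a n g"
  and summ: "\<And>g. summable (\<lambda>n. a n g)"
  and meas: "\<And>n. a n \<in> borel_measurable lam"
  and Cs: "C \<in> sets lam" and Cpos: "0 < emeasure lam C" and Cfin: "emeasure lam C < \<infinity>"
  shows "\<exists>B K. B \<in> sets lam \<and> B \<subseteq> C \<and> emeasure lam B > 0 \<and> (\<forall>n\<ge>1. K n > (0::nat)) \<and>
     filterlim K at_top sequentially \<and> (\<forall>g \<in> B \<union> range d. summable (\<lambda>n. real (K (Suc n)) * a n g))"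
proof -
  define R where "R N g = (\<Sum>n. if N \<le> n then a n g else 0)" for N g
  have Rs: "summable (\<lambda>n. if N \<le> n then a n g else 0)" for N g
    by (rule summable_comparison_test[OF _ summ[of g]]) (auto simp: nonneg)
  have Rnn: "0 \<le> R N g" for N g
    unfolding R_def by (intro suminf_nonneg Rs) (auto simp: nonneg)
  have Req: "R N g = (\<Sum>n. a n g) - (\<Sum>n<N. a n g)" for N g
  proof -
    have "(\<lambda>n. if N \<le> n then a n g else 0) = (\<lambda>n. a n g - (if n < N then a n g else 0))"
      by auto
    moreover have "summable (\<lambda>n. if n < N then a n g else 0)"
      by (rule summable_finite[of "{..<N}"]) auto
    moreover have "(\<Sum>n. if n < N then a n g else 0) = (\<Sum>n<N. a n g)"
      by (subst suminf_finite[of "{..<N}"]) auto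
    ultimately show ?thesis unfolding R_def
      using suminf_diff[OF summ[of g]] by metis
  qed
  have Rlim: "(\<lambda>N. R N g) \<longlonglongrightarrow> 0" for g
  proof -
    have "(\<lambda>N. (\<Sum>n. a n g) - (\<Sum>n<N. a n g)) \<longlonglongrightarrow> (\<Sum>n. a n g) - (\<Sum>n. a n g)"
      by (intro tendsto_diff tendsto_const summable_LIMSEQ summ)
    then show ?thesis unfolding Req by simp
  qed
  have Rmono: "R M g \<le> R N g" if "N \<le> M" for N M g
    unfolding R_def using that by (intro suminf_le Rs) (auto simp: nonneg)
  have Rmeas: "R N \<in> borel_measurable lam" for N
  proof (rule borel_measurable_LIMSEQ_real)
    show "(\<lambda>i. \<Sum>n<i. if N \<le> n then a n g else 0) \<longlonglongrightarrow> R N g" for g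
      unfolding R_def by (rule summable_LIMSEQ[OF Rs])
    show "(\<lambda>g. \<Sum>n<i. if N \<le> n then a n g else 0) \<in> borel_measurable lam" for i
      using meas by measurable
  qed
  have Cspace: "C \<subseteq> space lam" using Cs sets.sets_into_space by blast
  define m where "m = enn2real (emeasure lam C)"
  have mC: "emeasure lam C = ennreal m" and mpos: "m > 0"
    using Cpos Cfin unfolding m_def by (auto simp: ennreal_enn2real_if enn2real_positive_iff)
  define S where "S k N = C \<inter> {g \<in> space lam. R N g \<le> (1/2::real)^k}" for k N
  have Ss: "S k N \<in> sets lam" for k N
    unfolding S_def using Cs Rmeas[of N] by measurable
  define eps where "eps k = ennreal (m/4 * (1/2)^k)" for k :: nat
  have epspos: "0 < eps k" for k using mpos unfolding eps_def by simp
  have step: "\<exists>N. k \<le> N \<and> emeasure lam (C - S k N) < eps k \<and> (\<forall>j\<in>{..k}. R N (d j) \<le> (1/2)^k)" for k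
  proof -
    have dec: "decseq (\<lambda>N. C - S k N)"
      unfolding decseq_def
    proof (intro allI impI subsetI)
      fix N M g assume NM: "N \<le> M" and g: "g \<in> C - S k M"
      then show "g \<in> C - S k N" using Rmono[OF NM, of g] Cspace unfolding S_def by auto
    qed
    have "(\<Inter>N. C - S k N) = {}"
    proof (intro equals0I)
      fix g assume g: "g \<in> (\<Inter>N. C - S k N)"
      then have "g \<in> C" by blast
      have "eventually (\<lambda>N. R N g < (1/2)^k) sequentially"
        using order_tendstoD(2)[OF Rlim[of g]] by simp
      then obtain N where "R N g < (1/2)^k" using eventually_sequentially by auto
      then have "g \<in> S k N" using \<open>g \<in> C\<close> Cspace unfolding S_def by auto
      then show False using g by blast
    qed
    moreover have "(\<lambda>N. emeasure lam (C - S k N)) \<longlonglongrightarrow> emeasure lam (\<Inter>N. C - S k N)"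
    proof (rule Lim_emeasure_decseq[OF _ dec])
      show "range (\<lambda>N. C - S k N) \<subseteq> sets lam" using Cs Ss by auto
      show "emeasure lam (C - S k N) \<noteq> \<infinity>" for N
        using emeasure_mono[of "C - S k N" C lam] Cs Cfin by (auto simp: top_unique)
    qed
    ultimately have "(\<lambda>N. emeasure lam (C - S k N)) \<longlonglongrightarrow> 0" by (metis emeasure_empty)
    then have e1: "eventually (\<lambda>N. emeasure lam (C - S k N) < eps k) sequentially"
      using order_tendstoD(2) epspos by blast
    have e2: "eventually (\<lambda>N. \<forall>j\<in>{..k}. R N (d j) \<le> (1/2)^k) sequentially"
    proof (rule eventually_ball_finite)
      show "\<forall>j\<in>{..k}. eventually (\<lambda>N. R N (d j) \<le> (1/2)^k) sequentially"
      proof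
        fix j
        have "eventually (\<lambda>N. R N (d j) < (1/2)^k) sequentially"
          using order_tendstoD(2)[OF Rlim[of "d j"]] by simp
        then show "eventually (\<lambda>N. R N (d j) \<le> (1/2)^k) sequentially"
          by (rule eventually_mono) simp
      qed
    qed simp
    have "eventually (\<lambda>N. k \<le> N \<and> emeasure lam (C - S k N) < eps k \<and> (\<forall>j\<in>{..k}. R N (d j) \<le> (1/2)^k)) sequentially"
      using eventually_conj[OF eventually_ge_at_top[of k] eventually_conj[OF e1 e2]] by simp
    then obtain M where "\<forall>n\<ge>M. k \<le> n \<and> emeasure lam (C - S k n) < eps k \<and> (\<forall>j\<in>{..k}. R n (d j) \<le> (1/2)^k)"
      unfolding eventually_sequentially by blast
    then show ?thesis by blast
  qed
  then obtain N where N: "\<And>k. k \<le> N k" "\<And>k. emeasure lam (C - S k (N k)) < eps k"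
      "\<And>k j. j \<le> k \<Longrightarrow> R (N k) (d j) \<le> (1/2)^k"
  proof -
    have "\<exists>N. \<forall>k. k \<le> N k \<and> emeasure lam (C - S k (N k)) < eps k \<and> (\<forall>j\<in>{..k}. R (N k) (d j) \<le> (1/2)^k)"
      by (rule choice) (use step in blast)
    then obtain N where "\<forall>k. k \<le> N k \<and> emeasure lam (C - S k (N k)) < eps k \<and> (\<forall>j\<in>{..k}. R (N k) (d j) \<le> (1/2)^k)"
      by blast
    then show ?thesis by (intro that[of N]) auto
  qed
  define B where "B = (\<Inter>k. S k (N k))"
  have Bs: "B \<in> sets lam" unfolding B_def using Ss by auto
  have BC: "B \<subseteq> C" unfolding B_def S_def by auto
  have CBeq: "C - B = (\<Union>k. C - S k (N k))" unfolding B_def by auto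
  have rng: "range (\<lambda>k. C - S k (N k)) \<subseteq> sets lam" using Cs Ss by auto
  have "emeasure lam (C - B) \<le> (\<Sum>k. emeasure lam (C - S k (N k)))"
    unfolding CBeq by (rule emeasure_subadditive_countably[OF rng])
  also have "\<dots> \<le> (\<Sum>k. eps k)"
    using N(2) by (intro suminf_le) (auto intro: less_imp_le)
  also have "\<dots> = ennreal (\<Sum>k. m/4 * (1/2)^k)"
    unfolding eps_def using mpos
    by (intro suminf_ennreal2 summable_mult summable_geometric) auto
  also have "(\<Sum>k. m/4 * (1/2::real)^k) = m/2"
    by (subst suminf_mult) (auto simp: suminf_geometric)
  finally have CB: "emeasure lam (C - B) \<le> ennreal (m/2)" .
  have Bpos: "emeasure lam B > 0"
  proof (rule ccontr)
    assume "\<not> emeasure lam B > 0"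
    then have B0: "emeasure lam B = 0" by simp
    have "emeasure lam C \<le> emeasure lam (B \<union> (C - B))"
      by (intro emeasure_mono) (use Bs Cs in auto)
    also have "\<dots> \<le> emeasure lam B + emeasure lam (C - B)"
      by (intro emeasure_subadditive) (use Bs Cs in auto)
    also have "\<dots> \<le> ennreal (m/2)" using B0 CB by simp
    finally have "ennreal m \<le> ennreal (m/2)" using mC by simp
    then show False using mpos by (simp add: ennreal_le_iff2)
  qed
  define K where "K n = 1 + (\<Sum>k<n. if N k < n then 1 else 0::nat)" for n
  have Kpos: "\<forall>n\<ge>1. K n > 0" unfolding K_def by simp
  have Klim: "filterlim K at_top sequentially"
  proof (subst filterlim_at_top, intro allI)
    fix Z :: nat
    define M0 where "M0 = Z + (\<Sum>k<Z. N k) + 1"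
    have "Z \<le> K n" if "M0 \<le> n" for n
    proof -
      have lt: "N k < n" if "k < Z" for k
      proof -
        have "N k \<le> (\<Sum>k<Z. N k)" using that by (intro member_le_sum) auto
        then show ?thesis using \<open>M0 \<le> n\<close> unfolding M0_def by linarith
      qed
      have "Z = (\<Sum>k<Z. if N k < n then 1 else 0::nat)" using lt by simp
      also have "\<dots> \<le> (\<Sum>k<n. if N k < n then 1 else 0::nat)"
        using \<open>M0 \<le> n\<close> unfolding M0_def by (intro sum_mono2) auto
      finally show ?thesis unfolding K_def by linarith
    qed
    then show "eventually (\<lambda>n. Z \<le> K n) sequentially"
      unfolding eventually_sequentially by blast
  qed
  have summK: "summable (\<lambda>n. real (K (Suc n)) * a n g)" if k0: "\<And>k. k0 \<le> k \<Longrightarrow> R (N k) g \<le> (1/2)^k" for g k0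
  proof -
    define F where "F n k = ennreal (if N k \<le> n then a n g else 0)" for n k
    have RNs: "summable (\<lambda>k. R (N k) g)"
    proof (rule summable_comparison_test'[of "\<lambda>k. (1/2::real)^k" k0])
      show "summable (\<lambda>k. (1/2::real)^k)" by (rule summable_geometric) simp
      show "norm (R (N k) g) \<le> (1/2)^k" if "k0 \<le> k" for k using k0[OF that] Rnn by simp
    qed
    have "ennreal (real (K (Suc n)) * a n g) = ennreal (a n g) + (\<Sum>k. F n k)" for n
    proof -
      have "real (K (Suc n)) * a n g = a n g + (\<Sum>k<Suc n. if N k \<le> n then a n g else 0)"
      proof -
        have "real (K (Suc n)) = 1 + (\<Sum>k<Suc n. if N k \<le> n then 1 else 0::real)"
          unfolding K_def by (simp add: of_nat_sum less_Suc_eq_le, intro sum.cong, auto)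
        moreover have "(\<Sum>k<Suc n. if N k \<le> n then 1 else 0::real) * a n g = (\<Sum>k<Suc n. if N k \<le> n then a n g else 0)"
          unfolding sum_distrib_right by (rule sum.cong) auto
        ultimately show ?thesis by (simp add: distrib_right)
      qed
      then have "ennreal (real (K (Suc n)) * a n g) = ennreal (a n g) + ennreal (\<Sum>k<Suc n. if N k \<le> n then a n g else 0)"
      proof -
        have "0 \<le> (\<Sum>k<Suc n. if N k \<le> n then a n g else 0)" by (intro sum_nonneg) (simp add: nonneg)
        then show ?thesis using \<open>real (K (Suc n)) * a n g = _\<close> by (metis ennreal_plus nonneg)
      qed
      also have "ennreal (\<Sum>k<Suc n. if N k \<le> n then a n g else 0) = (\<Sum>k<Suc n. F n k)"
        unfolding F_def by (rule sum_ennreal[symmetric]) (simp add: nonneg)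
      also have "(\<Sum>k<Suc n. F n k) = (\<Sum>k. F n k)"
      proof (rule suminf_finite[symmetric])
        show "F n k = 0" if "k \<notin> {..<Suc n}" for k
          using that N(1)[of k] unfolding F_def by auto
      qed simp
      finally show ?thesis .
    qed
    then have "(\<Sum>n. ennreal (real (K (Suc n)) * a n g)) = (\<Sum>n. ennreal (a n g) + (\<Sum>k. F n k))"
      by simp
    also have "\<dots> = (\<Sum>n. ennreal (a n g)) + (\<Sum>n. \<Sum>k. F n k)"
      by (rule suminf_add[symmetric]) auto
    also have "(\<Sum>n. \<Sum>k. F n k) = (\<Sum>k. \<Sum>n. F n k)" by (rule ennreal_suminf_swap)
    also have "\<dots> = (\<Sum>k. ennreal (R (N k) g))"
      unfolding F_def R_def using nonneg Rs by (subst suminf_ennreal2) auto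
    also have "\<dots> = ennreal (\<Sum>k. R (N k) g)"
      using Rnn RNs by (intro suminf_ennreal2) auto
    also have "(\<Sum>n. ennreal (a n g)) = ennreal (\<Sum>n. a n g)"
      using nonneg summ by (intro suminf_ennreal2) auto
    finally have "(\<Sum>n. ennreal (real (K (Suc n)) * a n g)) \<noteq> top" by simp
    then show ?thesis by (rule summable_suminf_not_top[rotated]) (simp add: nonneg)
  qed
  show ?thesis
  proof (intro exI conjI ballI)
    show "B \<in> sets lam" "B \<subseteq> C" "emeasure lam B > 0" by fact+
    show "\<forall>n\<ge>1. K n > 0" by fact
    show "filterlim K at_top sequentially" by fact
    fix g assume "g \<in> B \<union> range d"
    then show "summable (\<lambda>n. real (K (Suc n)) * a n g)"
    proof
      assume "g \<in> B"
      then have "R (N k) g \<le> (1/2)^k" for k unfolding B_def S_def by auto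
      then show ?thesis by (intro summK[of 0]) auto
    next
      assume "g \<in> range d"
      then obtain j where "g = d j" by auto
      then show ?thesis using N(3) by (intro summK[of j]) auto
    qed
  qed
qed
theorem mainTheorem15:
  fixes lamG :: "'g::{topological_group_add, t2_space, second_countable_topology} measure"
    and SG :: "'g set"
    and SH :: "'h::{topological_group_add, t2_space, second_countable_topology} set"
    and \<phi> :: "real \<Rightarrow> real"
    and \<nu> :: "'x::polish_space measure"
    and act :: "'g \<Rightarrow> 'x \<Rightarrow> 'x"
    and c :: "'g \<Rightarrow> 'x \<Rightarrow> 'h"
  assumes "locally_compact_space (euclidean :: 'g topology)"
    and "locally_compact_space (euclidean :: 'h topology)"
    and "compactly_generated TYPE('g)"
    and "compactly_generated TYPE('h)"
    and "compact SG" and "generates SG"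
    and "compact SH" and "generates SH"
    and "haar_measure lamG"
    and "\<forall>t\<ge>0. \<phi> t \<ge> 0"
    and "sets \<nu> = sets borel"
    and "pmp_action act \<nu>"
    and "free_action act \<nu>"
    and "cocycle act \<nu> c"
    and "phi_integrable \<phi> SG SH \<nu> c"
  shows "\<exists>(A::'g set) (K::nat \<Rightarrow> nat).
           A \<in> sets borel \<and> emeasure lamG A > 0 \<and>
           (\<exists>D\<subseteq>A. countable D \<and> closure D = UNIV) \<and>
           (\<forall>n\<ge>1. K n > 0) \<and> filterlim K at_top sequentially \<and>
           (\<forall>g\<in>A. summable (\<lambda>n. real (K (Suc n)) * \<phi> (real (Suc n)) *
                 measure \<nu> {x\<in>space \<nu>. word_length SH (c g x) = Suc n}))"
proof -
  have P: "prob_space \<nu>" using assms(12) unfolding pmp_action_def by blast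
  interpret P: prob_space \<nu> by (rule P)
  interpret SF: sigma_finite_measure \<nu> by (rule prob_space_imp_sigma_finite[OF P])
  have cm: "(\<lambda>(g, x). c g x) \<in> borel_measurable (borel \<Otimes>\<^sub>M \<nu>)"
    using assms(14) unfolding cocycle_def by blast
  have phinn: "\<And>t. 0 \<le> t \<Longrightarrow> 0 \<le> \<phi> t" using assms(10) by blast
  define Ev where "Ev k g = {x\<in>space \<nu>. word_length SH (c g x) = k}" for k g
  have cg: "c g \<in> borel_measurable \<nu>" for g
  proof -
    have "(\<lambda>x. (g, x)) \<in> measurable \<nu> (borel \<Otimes>\<^sub>M \<nu>)" by measurable
    from measurable_comp[OF this cm] show ?thesis by (simp add: comp_def)
  qed
  have Evs: "Ev k g \<in> sets \<nu>" for k g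
  proof -
    have "Ev k g = c g -` {h. word_length SH h = k} \<inter> space \<nu>" unfolding Ev_def by auto
    then show ?thesis using measurable_sets[OF cg wl_eq_borel[OF assms(8) assms(7)]] by simp
  qed
  define a where "a n g = \<phi> (real (Suc n)) * measure \<nu> (Ev (Suc n) g)" for n g
  have ann: "0 \<le> a n g" for n g unfolding a_def by (intro mult_nonneg_nonneg phinn) auto
  have summ: "summable (\<lambda>n. a n g)" for g
  proof -
    define f where "f n x = ennreal (\<phi> (real (Suc n))) * indicator (Ev (Suc n) g) x" for n x
    have fm: "f n \<in> borel_measurable \<nu>" for n
      unfolding f_def using Evs by measurable
    have "(\<Sum>n. ennreal (a n g)) = (\<Sum>n. \<integral>\<^sup>+x. f n x \<partial>\<nu>)"
    proof (intro suminf_cong)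
      fix n
      show "ennreal (a n g) = (\<integral>\<^sup>+x. f n x \<partial>\<nu>)"
      proof -
        have "ennreal (a n g) = ennreal (\<phi> (real (Suc n))) * ennreal (measure \<nu> (Ev (Suc n) g))"
          unfolding a_def by (rule ennreal_mult) (auto intro: phinn)
        also have "\<dots> = ennreal (\<phi> (real (Suc n))) * emeasure \<nu> (Ev (Suc n) g)"
          by (simp only: P.emeasure_eq_measure)
        also have "\<dots> = (\<integral>\<^sup>+x. f n x \<partial>\<nu>)"
          unfolding f_def by (rule nn_integral_cmult_indicator[OF Evs, symmetric])
        finally show ?thesis .
      qed
    qed
    also have "\<dots> = (\<integral>\<^sup>+x. (\<Sum>n. f n x) \<partial>\<nu>)"
      by (rule nn_integral_suminf[OF fm, symmetric])
    also have "\<dots> \<le> (\<integral>\<^sup>+x. ennreal (\<phi> (real (word_length SH (c g x)))) \<partial>\<nu>)"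
    proof (rule nn_integral_mono)
      fix x assume x: "x \<in> space \<nu>"
      show "(\<Sum>n. f n x) \<le> ennreal (\<phi> (real (word_length SH (c g x))))"
      proof (cases "word_length SH (c g x)")
        case 0
        then have "f n x = 0" for n unfolding f_def Ev_def by auto
        then show ?thesis by simp
      next
        case (Suc m)
        have "(\<Sum>n. f n x) = (\<Sum>n\<in>{m}. f n x)"
          by (rule suminf_finite) (auto simp: f_def Ev_def Suc)
        also have "\<dots> = ennreal (\<phi> (real (word_length SH (c g x))))"
          using x by (simp add: f_def Ev_def Suc)
        finally show ?thesis by simp
      qed
    qed
    also have "\<dots> < \<infinity>" using assms(15) unfolding phi_integrable_def by blast
    finally show ?thesis
      by (intro summable_suminf_not_top ann) simp
  qed
  have ameas: "a n \<in> borel_measurable lamG" for n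
  proof -
    define Q where "Q = (\<lambda>(g, x). c g x) -` {h. word_length SH h = Suc n} \<inter> space (borel \<Otimes>\<^sub>M \<nu>)"
    have Qs: "Q \<in> sets (borel \<Otimes>\<^sub>M \<nu>)"
      unfolding Q_def by (rule measurable_sets[OF cm wl_eq_borel[OF assms(8) assms(7)]])
    have "Pair g -` Q = Ev (Suc n) g" for g
      unfolding Q_def Ev_def by (auto simp: space_pair_measure)
    then have "(\<lambda>g. emeasure \<nu> (Ev (Suc n) g)) \<in> borel_measurable borel"
      using P.measurable_emeasure_Pair[OF Qs] by simp
    moreover have slam: "sets lamG = sets borel" using assms(9) by (simp add: haar_measure_def)
    ultimately have em: "(\<lambda>g. emeasure \<nu> (Ev (Suc n) g)) \<in> borel_measurable lamG"
      using measurable_cong_sets[OF slam refl, where N=borel] by simp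
    have "a n = (\<lambda>g. \<phi> (real (Suc n)) * enn2real (emeasure \<nu> (Ev (Suc n) g)))"
      unfolding a_def by (simp add: P.emeasure_eq_measure)
    then show ?thesis using em
      by (simp only:) (intro borel_measurable_times borel_measurable_const borel_measurable_enn2real)
  qed
  have slam: "sets lamG = sets borel" using assms(9) by (simp add: haar_measure_def)
  have hU: "\<forall>U. open U \<and> U \<noteq> {} \<longrightarrow> emeasure lamG U > 0"
    using assms(9) unfolding haar_measure_def by (elim conjE) assumption
  have hK: "\<forall>K. compact K \<longrightarrow> emeasure lamG K < \<infinity>"
    using assms(9) unfolding haar_measure_def by (elim conjE) assumption
  have "\<exists>U K. openin euclidean U \<and> compactin euclidean K \<and> (0::'g) \<in> U \<and> U \<subseteq> K"
    using assms(1) unfolding locally_compact_space_def topspace_euclidean by blast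
  then obtain U C where UC0: "openin euclidean U" "compactin euclidean C" "(0::'g) \<in> U" "U \<subseteq> C"
    by blast
  have UC: "open U" "compact C" "(0::'g) \<in> U" "U \<subseteq> C"
    using UC0 open_openin compactin_euclidean_iff by blast+
  have Cs: "C \<in> sets lamG" unfolding slam by (rule borel_closed[OF compact_imp_closed[OF UC(2)]])
  have Us: "U \<in> sets lamG" unfolding slam by (rule borel_open[OF UC(1)])
  have Cpos: "0 < emeasure lamG C"
  proof -
    have "0 < emeasure lamG U" using hU UC(1) UC(3) by blast
    then show ?thesis using emeasure_mono[OF UC(4) Cs] by (rule less_le_trans)
  qed
  have Cfin: "emeasure lamG C < \<infinity>" using hK UC(2) by blast
  obtain D :: "'g set" where D: "countable D" "\<And>X. open X \<Longrightarrow> X \<noteq> {} \<Longrightarrow> \<exists>d\<in>D. d \<in> X"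
    using countable_dense_exists by blast
  have Dne: "D \<noteq> {}" using D(2)[of UNIV] by auto
  define d where "d = from_nat_into D"
  have rd: "range d = D" unfolding d_def using Dne D(1) by simp
  obtain B K where BK: "B \<in> sets lamG" "B \<subseteq> C" "emeasure lamG B > 0" "\<forall>n\<ge>1. K n > (0::nat)"
     "filterlim K at_top sequentially" "\<forall>g \<in> B \<union> range d. summable (\<lambda>n. real (K (Suc n)) * a n g)"
    using core[OF ann summ ameas Cs Cpos Cfin, of d] by blast
  have clD: "closure D = UNIV"
  proof (rule ccontr)
    assume "closure D \<noteq> UNIV"
    then have "- closure D \<noteq> {}" by auto
    moreover have "open (- closure D)" by auto
    moreover have "(- closure D) \<inter> D = {}" using closure_subset[of D] by auto
    ultimately show False using D(2)[of "- closure D"] by blast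
  qed
  have Dsets: "D \<in> sets borel"
    by (rule sets.countable[OF _ D(1)]) (simp add: borel_closed)
  have Asets: "B \<union> D \<in> sets borel" using BK(1) slam Dsets by auto
  have Apos: "emeasure lamG (B \<union> D) > 0"
    using BK(3) emeasure_mono[of B "B \<union> D" lamG] Asets slam by (auto intro: less_le_trans)
  show ?thesis
    apply (rule exI[of _ "B \<union> D"], rule exI[of _ K])
  proof (intro conjI ballI)
    show "B \<union> D \<in> sets borel" by fact
    show "emeasure lamG (B \<union> D) > 0" by fact
    show "\<exists>D'\<subseteq>B \<union> D. countable D' \<and> closure D' = UNIV" using D(1) clD by blast
    show "\<forall>n\<ge>1. K n > 0" by (rule BK(4))
    show "filterlim K at_top sequentially" by (rule BK(5))
    fix g assume "g \<in> B \<union> D"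
    then have "summable (\<lambda>n. real (K (Suc n)) * a n g)" using BK(6) rd by blast
    then show "summable (\<lambda>n. real (K (Suc n)) * \<phi> (real (Suc n)) *
                 measure \<nu> {x\<in>space \<nu>. word_length SH (c g x) = Suc n})"
      unfolding a_def Ev_def by (simp add: mult.assoc)
  qed
qed
end
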